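(* Let $p$ be a prime. For an integer $r$ with $|r|<2\sqrt p$ define \[ c_{r,p}=\begin{cases} 1/2, &\text{if } r^2-4p=-4\alpha^2 \text{ for some }\alpha\in\mathbb{Z},\\ 2/3, &\text{if } r^2-4p=-3\alpha^2 \text{ for some }\alpha\in\mathbb{Z},\\ 0, &\text{otherwise}. \end{cases} \] Then \[ \sum_{\substack{r\in\mathbb{Z},\ |r|<2\sqrt p,\\ r\equiv 0\pmod 2}}c_{r,p} =\begin{cases} 10/3, & p\equiv 1\pmod{12},\\ 2, & p\equiv 5\pmod{12},\\ 4/3, & p\equiv 7\pmod{12},\\ 0, & p\equiv 11\pmod{12}. \end{cases} \]
   Context: The sum runs over all even integers $r$ (positive, negative and zero) with $|r|<2\sqrt p$. *)

theory Defs
  imports Complex_Main "HOL-Computational_Algebra.Primes"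
begin

definition c_weight :: "int \<Rightarrow> nat \<Rightarrow> real" where
  "c_weight r p =
    (if \<exists>\<alpha>::int. r^2 - 4 * int p = - 4 * \<alpha>^2 then 1/2
     else if \<exists>\<alpha>::int. r^2 - 4 * int p = - 3 * \<alpha>^2 then 2/3
     else 0)"

definition even_range :: "nat \<Rightarrow> int set" where
  "even_range p = {r::int. real_of_int \<bar>r\<bar> < 2 * sqrt (real p) \<and> even r}"

end

theory Submission imports Defs "HOL-Number_Theory.Number_Theory" "HOL-Library.Discrete_Functions"
begin

lemma prime_not_sq: "prime (p::nat) \<Longrightarrow> int p \<noteq> s^2"
proof
  assume "prime p" "int p = s^2"
  hence "int p = int ((nat \<bar>s\<bar>)^2)" by simp
  hence "p = (nat \<bar>s\<bar>)^2" by (simp only: of_nat_eq_iff)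
  hence pe: "p = nat \<bar>s\<bar> * nat \<bar>s\<bar>" by (simp add: power2_eq_square)
  hence "prime (nat \<bar>s\<bar> * nat \<bar>s\<bar>)" using \<open>prime p\<close> by simp
  hence "nat \<bar>s\<bar> = 1" using prime_product by blast
  hence "p = 1" using pe by simp
  thus False using \<open>prime p\<close> by simp
qed

lemma sq3_zero: "(a::int)^2 = 3*b^2 \<Longrightarrow> a = 0"
proof (induction "nat \<bar>a\<bar>" arbitrary: a b rule: less_induct)
  case less
  show ?case
  proof (rule ccontr)
    assume a0: "a \<noteq> 0"
    have "(3::int) dvd a^2" using less.prems by simp
    hence "(3::int) dvd a" using prime_dvd_power[of "3::int" a 2] by simp
    then obtain c where c: "a = 3*c" by blast
    hence bc: "b^2 = 3*c^2" using less.prems by (simp add: power_mult_distrib)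
    have "nat \<bar>b\<bar> < nat \<bar>a\<bar>"
    proof -
      have "b \<noteq> 0" using less.prems a0 by auto
      hence "b^2 > 0" by simp
      hence "b^2 < a^2" using less.prems by linarith
      hence "\<bar>b\<bar> < \<bar>a\<bar>" by (simp add: power2_less_imp_less)
      thus ?thesis by simp
    qed
    from less.hyps[OF this bc] have "b = 0" .
    thus False using bc c a0 by simp
  qed
qed

lemma range_iff: "r \<in> even_range p \<longleftrightarrow> even r \<and> r^2 < 4 * int p"
proof -
  have 1: "2 * sqrt (real p) = sqrt (real_of_int (4 * int p))"
    by (simp add: real_sqrt_mult)
  have 2: "real_of_int \<bar>r\<bar> = sqrt (real_of_int (r^2))" by simp
  show ?thesis unfolding even_range_def by (simp only: mem_Collect_eq 1 2 real_sqrt_less_iff of_int_less_iff) auto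
qed

lemma abs_le_sq: "\<bar>r::int\<bar> \<le> r^2"
proof (cases "r = 0")
  case False
  hence "1 \<le> \<bar>r\<bar>" by simp
  hence "\<bar>r\<bar> * 1 \<le> \<bar>r\<bar> * \<bar>r\<bar>" by (intro mult_left_mono) auto
  thus ?thesis by (simp add: power2_eq_square)
qed simp

lemma finite_range: "finite (even_range p)"
proof (rule finite_subset)
  show "even_range p \<subseteq> {-4 * int p..4 * int p}"
  proof
    fix r assume "r \<in> even_range p"
    hence "r^2 < 4 * int p" by (simp add: range_iff)
    hence "\<bar>r\<bar> < 4 * int p" using abs_le_sq[of r] by linarith
    thus "r \<in> {-4 * int p..4 * int p}" by auto
  qed
qed simp

lemma thue:
  assumes "prime p"
  shows "\<exists>x y::int. (x \<noteq> 0 \<or> y \<noteq> 0) \<and> x^2 < int p \<and> y^2 < int p \<and> int p dvd (x - u*y)"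
proof -
  define m where "m = floor_sqrt p"
  have "m^2 \<le> p" unfolding m_def by simp
  moreover have "m^2 \<noteq> p" using prime_not_sq[OF assms, of "int m"] by (metis of_nat_power)
  ultimately have m1: "m^2 < p" by simp
  have m2: "p < (m+1)^2" unfolding m_def using Suc_floor_sqrt_power2_gt by simp
  define S where "S = {0..int m} \<times> {0..int m}"
  define f where "f = (\<lambda>(a,b). (a - u*b) mod int p)"
  have p0: "int p > 0" using assms prime_gt_0_nat by simp
  have "f ` S \<subseteq> {0..<int p}" unfolding f_def using p0 by auto
  hence "card (f ` S) \<le> card {0..<int p}" by (intro card_mono) auto
  hence cf: "card (f ` S) \<le> p" by simp
  have n1: "nat (int m + 1) = m+1" using nat_int[of "m+1"] by (simp only: of_nat_add of_nat_1)
  have cS: "card S = (m+1)^2" unfolding S_def by (simp add: card_cartesian_product power2_eq_square n1 del: of_nat_Suc)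
  have "\<not> inj_on f S"
  proof
    assume "inj_on f S"
    hence "card (f ` S) = card S" by (rule card_image)
    thus False using cf cS m2 by simp
  qed
  then obtain v w where v: "v \<in> S" and w: "w \<in> S" and vw: "v \<noteq> w" "f v = f w"
    unfolding inj_on_def by blast
  obtain a b where ab: "v = (a,b)" by (cases v)
  obtain a' b' where ab': "w = (a',b')" by (cases w)
  define x where "x = a - a'"
  define y where "y = b - b'"
  have bnd: "\<bar>x\<bar> \<le> int m" "\<bar>y\<bar> \<le> int m"
    using v w unfolding x_def y_def S_def ab ab' by auto
  have mp: "(int m)^2 < int p" using m1 by (metis of_nat_less_iff of_nat_power)
  have "x^2 \<le> (int m)^2" using bnd(1) abs_le_square_iff[of x "int m"] by simp
  hence hx: "x^2 < int p" using mp by linarith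
  have "y^2 \<le> (int m)^2" using bnd(2) abs_le_square_iff[of y "int m"] by simp
  hence hy: "y^2 < int p" using mp by linarith
  have "(a - u*b) mod int p = (a' - u*b') mod int p" using vw(2) unfolding f_def ab ab' by simp
  hence "int p dvd (a - u*b) - (a' - u*b')" by (simp add: mod_eq_dvd_iff)
  moreover have "(a - u*b) - (a' - u*b') = x - u*y" unfolding x_def y_def by (simp add: algebra_simps)
  ultimately have "int p dvd x - u*y" by simp
  moreover have "x \<noteq> 0 \<or> y \<noteq> 0" using vw(1) unfolding ab ab' x_def y_def by auto
  ultimately show ?thesis using hx hy by blast
qed

lemma exists_ord:
  assumes "prime p" "d dvd p - 1" "d > 0"
  shows "\<exists>x. ord p x = d"
proof -
  have "card {x\<in>totatives p. ord p x = d} = totient d"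
    using prime_card_elements_with_ord_eq_totient[of p d] assms prime_gt_1_nat[OF assms(1)] by simp
  also have "\<dots> > 0" using assms(3) by simp
  finally have "{x\<in>totatives p. ord p x = d} \<noteq> {}" by (metis card.empty less_irrefl)
  thus ?thesis by blast
qed

lemma nat_cong_to_dvd: "[a = b] (mod p) \<Longrightarrow> int p dvd int a - int b"
  using cong_int_iff[of a b p] cong_iff_dvd_diff[of "int a" "int b" "int p"] by simp

lemma nat_ncong_to_ndvd: "\<not>[a = b] (mod p) \<Longrightarrow> \<not> int p dvd int a - int b"
  using cong_int_iff[of a b p] cong_iff_dvd_diff[of "int a" "int b" "int p"] by simp

lemma two_sq:
  assumes "prime p" "p mod 4 = 1"
  shows "\<exists>a b::int. a^2 + b^2 = int p"
proof -
  have dd: "4 dvd p - 1" using assms(2) by presburger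
  have "\<exists>x. ord p x = 4" by (rule exists_ord[OF assms(1) dd]) simp
  then obtain x where ox: "ord p x = 4" by (elim exE)
  have c1: "[x^4 = 1] (mod p)" using ord_works[of x p] ox by simp
  have c2: "\<not> [x^2 = 1] (mod p)" using ord_minimal[of 2 p x] ox by simp
  define X where "X = int x"
  have d1: "int p dvd (X^2 - 1) * (X^2 + 1)"
    using nat_cong_to_dvd[OF c1] unfolding X_def by (simp add: algebra_simps power2_eq_square power4_eq_xxxx)
  have d2: "\<not> int p dvd X^2 - 1" using nat_ncong_to_ndvd[OF c2] unfolding X_def by simp
  have pp: "prime (int p)" using assms(1) by simp
  have du: "int p dvd X^2 + 1" using d1 d2 prime_dvd_mult_iff[OF pp] by blast
  obtain x y where xy: "x \<noteq> 0 \<or> y \<noteq> 0" "x^2 < int p" "y^2 < int p" "int p dvd x - X*y"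
    using thue[OF assms(1), of X] by blast
  have "x^2 + y^2 = (x - X*y)*(x + X*y) + y^2*(X^2+1)" by (simp add: algebra_simps power2_eq_square)
  hence "int p dvd x^2 + y^2" using xy(4) du by simp
  then obtain k where k: "x^2 + y^2 = int p * k" by blast
  have pos: "x^2 + y^2 > 0" using xy(1) by (metis add_pos_nonneg add_nonneg_pos zero_le_power2 zero_less_power2)
  have p0: "int p > 0" using assms(1) prime_gt_0_nat by simp
  have "k > 0" using pos k p0 by (simp add: zero_less_mult_iff)
  moreover have "k < 2"
  proof -
    have "int p * k < int p * 2" using k xy(2,3) by linarith
    thus ?thesis using p0 by (simp add: mult_less_cancel_left)
  qed
  ultimately have "k = 1" by simp
  hence "x^2 + y^2 = int p" using k by simp
  thus ?thesis by blast
qed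

lemma par4: "even ((x::int)^2 + 3*y^2) \<Longrightarrow> 4 dvd x^2 + 3*y^2"
proof (cases "even x")
  case True
  assume e: "even (x^2 + 3*y^2)"
  hence "even y" using True by auto
  then obtain b where b: "y = 2*b" by blast
  obtain a where a: "x = 2*a" using True by blast
  have "x^2 + 3*y^2 = 4*(a^2 + 3*b^2)" unfolding a b by (simp add: algebra_simps power2_eq_square)
  thus ?thesis by simp
next
  case False
  assume e: "even (x^2 + 3*y^2)"
  hence "odd y" using False by auto
  then obtain b where b: "y = 2*b+1" by (meson oddE)
  obtain a where a: "x = 2*a+1" using False by (meson oddE)
  have "x^2 + 3*y^2 = 4*(a^2 + a + 3*b^2 + 3*b + 1)" unfolding a b by (simp add: algebra_simps power2_eq_square)
  thus ?thesis by simp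
qed

lemma three_sq:
  assumes "prime p" "p mod 3 = 1"
  shows "\<exists>a b::int. a^2 + 3*b^2 = int p"
proof -
  have dd: "3 dvd p - 1" using assms(2) by presburger
  have "\<exists>x. ord p x = 3" by (rule exists_ord[OF assms(1) dd]) simp
  then obtain x where ox: "ord p x = 3" by (elim exE)
  have c1: "[x^3 = 1] (mod p)" using ord_works[of x p] ox by simp
  have c2: "\<not> [x^1 = 1] (mod p)" using ord_minimal[of 1 p x] ox by simp
  define X where "X = int x"
  have d1: "int p dvd (X - 1) * (X^2 + X + 1)"
    using nat_cong_to_dvd[OF c1] unfolding X_def by (simp add: algebra_simps power2_eq_square power3_eq_cube)
  have d2: "\<not> int p dvd X - 1" using nat_ncong_to_ndvd[OF c2] unfolding X_def by simp
  have pp: "prime (int p)" using assms(1) by simp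
  have du0: "int p dvd X^2 + X + 1" using d1 d2 prime_dvd_mult_iff[OF pp] by blast
  define U where "U = 2*X+1"
  have eq: "U^2 + 3 = 4 * (X^2 + X + 1)" unfolding U_def by (simp add: algebra_simps power2_eq_square)
  have "int p dvd 4 * (X^2 + X + 1)" using du0 by (rule dvd_mult)
  hence du: "int p dvd U^2 + 3" by (simp only: eq)
  obtain x y where xy: "x \<noteq> 0 \<or> y \<noteq> 0" "x^2 < int p" "y^2 < int p" "int p dvd x - U*y"
    using thue[OF assms(1), of U] by blast
  have "x^2 + 3*y^2 = (x - U*y)*(x + U*y) + y^2*(U^2+3)" by (simp add: algebra_simps power2_eq_square)
  hence "int p dvd x^2 + 3*y^2" using xy(4) du by simp
  then obtain k where k: "x^2 + 3*y^2 = int p * k" by blast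
  have pos: "x^2 + 3*y^2 > 0"
  proof (cases "x = 0")
    case True
    hence "y^2 > 0" using xy(1) by simp
    thus ?thesis using True by simp
  next
    case False
    hence "x^2 > 0" by simp
    moreover have "3*y^2 \<ge> 0" by simp
    ultimately show ?thesis by linarith
  qed
  have p0: "int p > 0" using assms(1) prime_gt_0_nat by simp
  have "k > 0" using pos k p0 by (simp add: zero_less_mult_iff)
  moreover have "k < 4"
  proof -
    have "int p * k < int p * 4" using k xy(2,3) by linarith
    thus ?thesis using p0 by (simp add: mult_less_cancel_left)
  qed
  ultimately have "k = 1 \<or> k = 2 \<or> k = 3" by auto
  moreover have "k \<noteq> 2"
  proof
    assume "k = 2"
    hence "x^2 + 3*y^2 = 2 * int p" using k by simp
    hence "4 dvd 2 * int p" using par4[of x y] by (metis dvd_triv_left)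
    hence "2 dvd p" by presburger
    hence "p = 2" using assms(1) primes_dvd_imp_eq[of 2 p] by simp
    thus False using assms(2) by simp
  qed
  moreover have "k = 3 \<Longrightarrow> ?thesis"
  proof -
    assume "k = 3"
    hence k3: "x^2 + 3*y^2 = 3 * int p" using k by simp
    hence "x^2 = 3*(int p - y^2)" by (simp add: algebra_simps)
    hence "(3::int) dvd x^2" by simp
    hence "(3::int) dvd x" using prime_dvd_power[of "3::int" x 2] by simp
    then obtain z where z: "x = 3*z" by blast
    have "y^2 + 3*z^2 = int p" using k3 unfolding z by (simp add: power2_eq_square algebra_simps)
    thus ?thesis by blast
  qed
  moreover have "k = 1 \<Longrightarrow> ?thesis"
  proof -
    assume "k = 1"
    hence "x^2 + 3*y^2 = int p" using k by simp
    thus ?thesis by blast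
  qed
  ultimately show ?thesis by blast
qed


lemma sqmod4: "(s::int)^2 mod 4 = 0 \<or> s^2 mod 4 = 1"
proof (cases "even s")
  case True
  then obtain k where "s = 2*k" by blast
  hence "s^2 = 4*k^2" by (simp add: power2_eq_square)
  thus ?thesis by simp
next
  case False
  then obtain k where "s = 2*k+1" by (meson oddE)
  hence e: "s^2 = 1 + 4*(k^2+k)" by (simp add: power2_eq_square algebra_simps)
  have "(1 + 4*(k^2+k)) mod 4 = (1::int) mod 4" by (rule mod_mult_self2)
  hence "s^2 mod 4 = 1" by (simp only: e) simp
  thus ?thesis by simp
qed

lemma no_two_sq: "((s::int)^2 + t^2) mod 4 \<noteq> 3"
proof -
  have "(s^2 + t^2) mod 4 = (s^2 mod 4 + t^2 mod 4) mod 4" by (simp add: mod_add_eq)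
  thus ?thesis using sqmod4[of s] sqmod4[of t] by auto
qed

lemma sqmod3: "(s::int)^2 mod 3 \<noteq> 2"
proof -
  have "s^2 mod 3 = (s mod 3)^2 mod 3" by (simp add: power_mod)
  moreover have "s mod 3 = 0 \<or> s mod 3 = 1 \<or> s mod 3 = 2" by auto
  ultimately show ?thesis by auto
qed

lemma no_three_sq: "((s::int)^2 + 3*t^2) mod 3 \<noteq> 2"
proof -
  have "(s^2 + 3*t^2) mod 3 = s^2 mod 3" by simp
  thus ?thesis using sqmod3[of s] by simp
qed

lemma uniq2_aux:
  fixes a b s t P :: int
  assumes "a^2 + b^2 = P" "s^2 + t^2 = P" "P > 0" "P dvd a*t - b*s"
  shows "s^2 = a^2 \<or> s^2 = b^2"
proof -
  obtain k where k: "a*t - b*s = P*k" using assms(4) by blast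
  have "(a*s + b*t)^2 + (a*t - b*s)^2 = (a^2+b^2)*(s^2+t^2)" by (simp add: algebra_simps power2_eq_square)
  hence id: "(a*s + b*t)^2 + (a*t - b*s)^2 = P^2" using assms(1,2) by (simp add: power2_eq_square)
  hence "(a*t - b*s)^2 \<le> P^2" by (metis le_add_same_cancel2 zero_le_power2)
  hence "P^2 * k^2 \<le> P^2 * 1" unfolding k by (simp add: power_mult_distrib)
  hence k2: "k^2 \<le> 1" using assms(3) by (simp add: mult_le_cancel_left)
  hence "\<bar>k\<bar> \<le> 1" using abs_le_sq[of k] by linarith
  hence "k = 0 \<or> k = 1 \<or> k = -1" by auto
  thus ?thesis
  proof (elim disjE)
    assume "k = 0"
    hence e: "a*t = b*s" using k by simp
    have "P * s^2 = (a^2+b^2)*s^2" using assms(1) by simp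
    also have "\<dots> = a^2*s^2 + (b*s)^2" by (simp add: algebra_simps power2_eq_square)
    also have "\<dots> = a^2*s^2 + (a*t)^2" using e by simp
    also have "\<dots> = a^2*(s^2+t^2)" by (simp add: algebra_simps power2_eq_square)
    also have "\<dots> = a^2 * P" using assms(2) by simp
    finally have "P * s^2 = P * a^2" by simp
    thus ?thesis using assms(3) by simp
  next
    assume "k = 1"
    hence "(a*t - b*s)^2 = P^2" using k by simp
    hence "(a*s + b*t)^2 = 0" using id by simp
    hence e: "a*s = -(b*t)" by (simp add: eq_neg_iff_add_eq_0)
    have "P * s^2 = (a^2+b^2)*s^2" using assms(1) by simp
    also have "\<dots> = (a*s)^2 + b^2*s^2" by (simp add: algebra_simps power2_eq_square)
    also have "\<dots> = (b*t)^2 + b^2*s^2" using e by simp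
    also have "\<dots> = b^2*(s^2+t^2)" by (simp add: algebra_simps power2_eq_square)
    also have "\<dots> = b^2 * P" using assms(2) by simp
    finally have "P * s^2 = P * b^2" by simp
    thus ?thesis using assms(3) by simp
  next
    assume "k = -1"
    hence "(a*t - b*s)^2 = P^2" using k by simp
    hence "(a*s + b*t)^2 = 0" using id by simp
    hence e: "a*s = -(b*t)" by (simp add: eq_neg_iff_add_eq_0)
    have "P * s^2 = (a^2+b^2)*s^2" using assms(1) by simp
    also have "\<dots> = (a*s)^2 + b^2*s^2" by (simp add: algebra_simps power2_eq_square)
    also have "\<dots> = (b*t)^2 + b^2*s^2" using e by simp
    also have "\<dots> = b^2*(s^2+t^2)" by (simp add: algebra_simps power2_eq_square)
    also have "\<dots> = b^2 * P" using assms(2) by simp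
    finally have "P * s^2 = P * b^2" by simp
    thus ?thesis using assms(3) by simp
  qed
qed

lemma uniq2:
  fixes a b s t :: int
  assumes "prime p" "a^2 + b^2 = int p" "s^2 + t^2 = int p"
  shows "s = a \<or> s = -a \<or> s = b \<or> s = -b"
proof -
  have pp: "prime (int p)" using assms(1) by simp
  have p0: "int p > 0" using assms(1) prime_gt_0_nat by simp
  have "(a*t - b*s) * (a*t + b*s) = a^2 * t^2 - b^2 * s^2" by (simp add: algebra_simps power2_eq_square)
  also have "\<dots> = a^2 * (int p - s^2) - (int p - a^2) * s^2"
  proof -
    have hb: "b^2 = int p - a^2" "t^2 = int p - s^2" using assms(2,3) by linarith+
    show ?thesis by (simp only: hb)
  qed
  also have "\<dots> = int p * (a^2 - s^2)" by (simp add: algebra_simps)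
  finally have "int p dvd (a*t - b*s) * (a*t + b*s)" by simp
  hence "int p dvd a*t - b*s \<or> int p dvd a*t + b*s"
    using prime_dvd_mult_iff[OF pp] by blast
  moreover have "a*(-t) - b*s = -(a*t + b*s)" by simp
  ultimately have "int p dvd a*t - b*s \<or> int p dvd a*(-t) - b*s" by (metis dvd_minus_iff)
  moreover have "(-t)^2 = t^2" by simp
  ultimately have "s^2 = a^2 \<or> s^2 = b^2" using uniq2_aux[OF assms(2) assms(3) p0] uniq2_aux[of a b "int p" s "-t"] assms(2,3) p0 by auto
  thus ?thesis using power2_eq_iff by blast
qed

lemma uniq3_aux:
  fixes a b s t P :: int
  assumes "a^2 + 3*b^2 = P" "s^2 + 3*t^2 = P" "P > 0" "P dvd a*t - b*s"
  shows "s^2 = a^2"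
proof -
  obtain k where k: "a*t - b*s = P*k" using assms(4) by blast
  have "(a*s + 3*b*t)^2 + 3*(a*t - b*s)^2 = (a^2+3*b^2)*(s^2+3*t^2)" by (simp add: algebra_simps power2_eq_square)
  hence id: "(a*s + 3*b*t)^2 + 3*(a*t - b*s)^2 = P^2" using assms(1,2) by (simp add: power2_eq_square)
  hence "3*(a*t - b*s)^2 \<le> P^2" by (metis le_add_same_cancel2 zero_le_power2)
  hence "P^2 * (3*k^2) \<le> P^2 * 1" unfolding k by (simp add: power_mult_distrib algebra_simps)
  hence "3*k^2 \<le> 1" using assms(3) by (simp add: mult_le_cancel_left)
  moreover have "k \<noteq> 0 \<Longrightarrow> 1 \<le> k^2" using abs_le_sq[of k] by linarith
  ultimately have "k = 0" by linarith
  hence e: "a*t = b*s" using k by simp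
  have "P * s^2 = (a^2+3*b^2)*s^2" using assms(1) by simp
  also have "\<dots> = a^2*s^2 + 3*(b*s)^2" by (simp add: algebra_simps power2_eq_square)
  also have "\<dots> = a^2*s^2 + 3*(a*t)^2" using e by simp
  also have "\<dots> = a^2*(s^2+3*t^2)" by (simp add: algebra_simps power2_eq_square)
  also have "\<dots> = a^2 * P" using assms(2) by simp
  finally have "P * s^2 = P * a^2" by simp
  thus ?thesis using assms(3) by simp
qed


lemma uniq3:
  fixes a b s t :: int
  assumes "prime p" "p \<noteq> 3" "a^2 + 3*b^2 = int p" "s^2 + 3*t^2 = int p"
  shows "s = a \<or> s = -a"
proof -
  have pp: "prime (int p)" using assms(1) by simp
  have p0: "int p > 0" using assms(1) prime_gt_0_nat by simp
  have "3 * ((a*t - b*s) * (a*t + b*s)) = a^2 * (3*t^2) - (3*b^2) * s^2" by (simp add: algebra_simps power2_eq_square)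
  also have "\<dots> = a^2 * (int p - s^2) - (int p - a^2) * s^2"
  proof -
    have hb: "3*b^2 = int p - a^2" "3*t^2 = int p - s^2" using assms(3,4) by linarith+
    show ?thesis by (simp only: hb)
  qed
  also have "\<dots> = int p * (a^2 - s^2)" by (simp add: algebra_simps)
  finally have "int p dvd 3 * ((a*t - b*s) * (a*t + b*s))" by simp
  moreover have "\<not> int p dvd 3"
  proof
    assume "int p dvd 3"
    hence "int p = 3" using primes_dvd_imp_eq[OF pp, of 3] by simp
    thus False using assms(2) by simp
  qed
  ultimately have "int p dvd a*t - b*s \<or> int p dvd a*t + b*s"
    using prime_dvd_mult_iff[OF pp] by blast
  moreover have "a*(-t) - b*s = -(a*t + b*s)" by simp
  ultimately have "int p dvd a*t - b*s \<or> int p dvd a*(-t) - b*s" by (metis dvd_minus_iff)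
  moreover have "s^2 + 3*(-t)^2 = int p" using assms(4) by simp
  ultimately have "s^2 = a^2" using uniq3_aux[OF assms(3) assms(4) p0] uniq3_aux[OF assms(3) _ p0, of s "-t"] by blast
  thus ?thesis using power2_eq_iff by blast
qed

definition setA :: "nat \<Rightarrow> int set" where
  "setA p = {r \<in> even_range p. \<exists>\<alpha>::int. r^2 - 4 * int p = - 4 * \<alpha>^2}"
definition setB :: "nat \<Rightarrow> int set" where
  "setB p = {r \<in> even_range p. \<exists>\<alpha>::int. r^2 - 4 * int p = - 3 * \<alpha>^2}"

lemma setA_D: "r \<in> setA p \<Longrightarrow> \<exists>s t. r = 2*s \<and> s^2 + t^2 = int p"
proof -
  assume "r \<in> setA p"
  then obtain \<alpha> where r: "r \<in> even_range p" "r^2 - 4 * int p = - 4 * \<alpha>^2" unfolding setA_def by blast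
  then obtain s where s: "r = 2*s" using range_iff by blast
  have "4*(s^2 + \<alpha>^2) = 4 * int p" using r(2) unfolding s by (simp add: power_mult_distrib algebra_simps)
  hence "s^2 + \<alpha>^2 = int p" by simp
  thus ?thesis using s by blast
qed

lemma setA_I: "prime p \<Longrightarrow> s^2 + t^2 = int p \<Longrightarrow> 2*s \<in> setA p"
proof -
  assume pr: "prime p" and e: "s^2 + t^2 = int p"
  have "t \<noteq> 0" using prime_not_sq[OF pr, of s] e by auto
  hence "t^2 > 0" by simp
  hence "s^2 < int p" using e by linarith
  hence "(2*s)^2 < 4 * int p" by (simp add: power_mult_distrib)
  hence "2*s \<in> even_range p" using range_iff by simp
  moreover have "(2*s)^2 - 4 * int p = -4 * t^2" using e by (simp add: power_mult_distrib algebra_simps)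
  ultimately show ?thesis unfolding setA_def by blast
qed

lemma setB_D: "r \<in> setB p \<Longrightarrow> \<exists>s t. r = 2*s \<and> s^2 + 3*t^2 = int p"
proof -
  assume "r \<in> setB p"
  then obtain \<alpha> where r: "r \<in> even_range p" "r^2 - 4 * int p = - 3 * \<alpha>^2" unfolding setB_def by blast
  then obtain s where s: "r = 2*s" using range_iff by blast
  have e: "3*\<alpha>^2 = 4*(int p - s^2)" using r(2) unfolding s by (simp add: power_mult_distrib algebra_simps)
  hence "even (3*\<alpha>^2)" by simp
  hence "even \<alpha>" by simp
  then obtain t where t: "\<alpha> = 2*t" by blast
  have "4*(s^2 + 3*t^2) = 4 * int p" using e unfolding t by (simp add: power_mult_distrib algebra_simps)
  hence "s^2 + 3*t^2 = int p" by simp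
  thus ?thesis using s by blast
qed

lemma setB_I: "prime p \<Longrightarrow> s^2 + 3*t^2 = int p \<Longrightarrow> 2*s \<in> setB p"
proof -
  assume pr: "prime p" and e: "s^2 + 3*t^2 = int p"
  have "t \<noteq> 0" using prime_not_sq[OF pr, of s] e by auto
  hence "t^2 > 0" by simp
  hence "s^2 < int p" using e by linarith
  hence "(2*s)^2 < 4 * int p" by (simp add: power_mult_distrib)
  hence "2*s \<in> even_range p" using range_iff by simp
  moreover have "(2*s)^2 - 4 * int p = -3 * (2*t)^2" using e by (simp add: power_mult_distrib algebra_simps)
  ultimately show ?thesis unfolding setB_def by blast
qed

lemma AB_disj:
  assumes "prime p" "r^2 - 4 * int p = - 4 * \<alpha>^2" "r^2 - 4 * int p = - 3 * \<beta>^2"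
  shows False
proof -
  have "(2*\<alpha>)^2 = 3*\<beta>^2" using assms(2,3) by (simp add: power_mult_distrib)
  hence "2*\<alpha> = 0" by (rule sq3_zero)
  hence "r^2 = 4 * int p" using assms(2) by simp
  hence "even (r^2)" by simp
  hence "even r" by simp
  then obtain s where s: "r = 2*s" by blast
  have "4 * s^2 = 4 * int p" using \<open>r^2 = 4 * int p\<close> unfolding s by (simp add: power_mult_distrib)
  hence "int p = s^2" by simp
  thus False using prime_not_sq[OF assms(1)] by blast
qed


lemma cnt:
  assumes "finite E" "A \<subseteq> E"
  shows "(\<Sum>r\<in>E. if r \<in> A then c else 0) = (c::real) * real (card A)"
proof -
  have "(\<Sum>r\<in>E. if r \<in> A then c else 0) = (\<Sum>r\<in>E \<inter> A. c)"
    using sum.inter_restrict[OF assms(1), of "\<lambda>_. c" A] by simp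
  also have "E \<inter> A = A" using assms(2) by blast
  finally show ?thesis by simp
qed

lemma sum_eq:
  assumes "prime p"
  shows "(\<Sum>r\<in>even_range p. c_weight r p) = 1/2 * real (card (setA p)) + 2/3 * real (card (setB p))"
proof -
  have w: "c_weight r p = (if r \<in> setA p then 1/2 else 0) + (if r \<in> setB p then 2/3 else 0)"
    if r: "r \<in> even_range p" for r
  proof (cases "r \<in> setA p")
    case True
    hence nb: "r \<notin> setB p" using AB_disj[OF assms] unfolding setA_def setB_def by blast
    from True obtain \<alpha> where "r^2 - 4 * int p = - 4 * \<alpha>^2" unfolding setA_def by blast
    hence "c_weight r p = 1/2" unfolding c_weight_def by auto
    thus ?thesis using True nb by simp
  next
    case False
    hence n1: "\<not> (\<exists>\<alpha>::int. r^2 - 4 * int p = - 4 * \<alpha>^2)" using r unfolding setA_def by blast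
    show ?thesis
    proof (cases "r \<in> setB p")
      case True
      then obtain \<alpha> where "r^2 - 4 * int p = - 3 * \<alpha>^2" unfolding setB_def by blast
      hence "c_weight r p = 2/3" using n1 unfolding c_weight_def by auto
      thus ?thesis using True False by simp
    next
      case F2: False
      hence n2: "\<not> (\<exists>\<alpha>::int. r^2 - 4 * int p = - 3 * \<alpha>^2)" using r unfolding setB_def by blast
      have "c_weight r p = 0" using n1 n2 unfolding c_weight_def by simp
      thus ?thesis using False F2 by simp
    qed
  qed
  have "(\<Sum>r\<in>even_range p. c_weight r p) = (\<Sum>r\<in>even_range p. (if r \<in> setA p then 1/2 else 0) + (if r \<in> setB p then 2/3 else 0))"
    using w by (rule sum.cong[OF refl])
  also have "\<dots> = (\<Sum>r\<in>even_range p. if r \<in> setA p then 1/2 else 0) + (\<Sum>r\<in>even_range p. if r \<in> setB p then 2/3 else 0)"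
    by (rule sum.distrib)
  also have "\<dots> = 1/2 * real (card (setA p)) + 2/3 * real (card (setB p))"
    using cnt[OF finite_range, of "setA p" p "1/2"] cnt[OF finite_range, of "setB p" p "2/3"]
    unfolding setA_def setB_def by auto
  finally show ?thesis .
qed

lemma cardA1:
  assumes "prime p" "p mod 4 = 1"
  shows "card (setA p) = 4"
proof -
  obtain a b where ab: "a^2 + b^2 = int p" using two_sq[OF assms] by blast
  have a0: "a \<noteq> 0" using prime_not_sq[OF assms(1), of b] ab by auto
  have b0: "b \<noteq> 0" using prime_not_sq[OF assms(1), of a] ab by auto
  have ne: "a \<noteq> b \<and> a \<noteq> -b"
  proof (rule ccontr)
    assume "\<not> (a \<noteq> b \<and> a \<noteq> -b)"
    hence "a^2 = b^2" by auto
    hence "int p = 2 * a^2" using ab by simp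
    hence "even (int p)" by simp
    hence "even p" by simp
    thus False using assms(2) by presburger
  qed
  have "setA p = {2*a, -2*a, 2*b, -2*b}"
  proof
    show "setA p \<subseteq> {2*a, -2*a, 2*b, -2*b}"
    proof
      fix r assume "r \<in> setA p"
      then obtain s t where st: "r = 2*s" "s^2 + t^2 = int p" using setA_D by blast
      have "s = a \<or> s = -a \<or> s = b \<or> s = -b" by (rule uniq2[OF assms(1) ab st(2)])
      thus "r \<in> {2*a, -2*a, 2*b, -2*b}" using st(1) by auto
    qed
  next
    have "2*a \<in> setA p" using setA_I[OF assms(1) ab] .
    moreover have "2*(-a) \<in> setA p" using setA_I[OF assms(1), of "-a" b] ab by simp
    moreover have "2*b \<in> setA p" using setA_I[OF assms(1), of b a] ab by (simp add: add.commute)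
    moreover have "2*(-b) \<in> setA p" using setA_I[OF assms(1), of "-b" a] ab by (simp add: add.commute)
    ultimately show "{2*a, -2*a, 2*b, -2*b} \<subseteq> setA p" by simp
  qed
  thus ?thesis using a0 b0 ne by auto
qed

lemma cardA3:
  assumes "p mod 4 = 3"
  shows "card (setA p) = 0"
proof -
  have "setA p = {}"
  proof (rule ccontr)
    assume "setA p \<noteq> {}"
    then obtain r where "r \<in> setA p" by blast
    then obtain s t where "s^2 + t^2 = int p" using setA_D by blast
    moreover have "int p mod 4 = 3" using assms by presburger
    ultimately show False using no_two_sq[of s t] by simp
  qed
  thus ?thesis by simp
qed

lemma cardB1:
  assumes "prime p" "p mod 3 = 1"
  shows "card (setB p) = 2"
proof -
  obtain a b where ab: "a^2 + 3*b^2 = int p" using three_sq[OF assms] by blast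
  have p3: "p \<noteq> 3" using assms(2) by auto
  have a0: "a \<noteq> 0"
  proof
    assume "a = 0"
    hence "int p = 3 * b^2" using ab by simp
    hence "3 dvd int p" by simp
    hence "3 dvd p" by presburger
    hence "p = 3" using assms(1) primes_dvd_imp_eq[of 3 p] by simp
    thus False using p3 by simp
  qed
  have "setB p = {2*a, -2*a}"
  proof
    show "setB p \<subseteq> {2*a, -2*a}"
    proof
      fix r assume "r \<in> setB p"
      then obtain s t where st: "r = 2*s" "s^2 + 3*t^2 = int p" using setB_D by blast
      have "s = a \<or> s = -a" by (rule uniq3[OF assms(1) p3 ab st(2)])
      thus "r \<in> {2*a, -2*a}" using st(1) by auto
    qed
  next
    have "2*a \<in> setB p" using setB_I[OF assms(1) ab] .
    moreover have "2*(-a) \<in> setB p" using setB_I[OF assms(1), of "-a" b] ab by simp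
    ultimately show "{2*a, -2*a} \<subseteq> setB p" by simp
  qed
  thus ?thesis using a0 by auto
qed

lemma cardB2:
  assumes "p mod 3 = 2"
  shows "card (setB p) = 0"
proof -
  have "setB p = {}"
  proof (rule ccontr)
    assume "setB p \<noteq> {}"
    then obtain r where "r \<in> setB p" by blast
    then obtain s t where "s^2 + 3*t^2 = int p" using setB_D by blast
    moreover have "int p mod 3 = 2" using assms by presburger
    ultimately show False using no_three_sq[of s t] by simp
  qed
  thus ?thesis by simp
qed

theorem proposition10:
  fixes p :: nat
  assumes "prime p"
  shows "(p mod 12 = 1 \<longrightarrow> (\<Sum>r\<in>even_range p. c_weight r p) = 10/3)
       \<and> (p mod 12 = 5 \<longrightarrow> (\<Sum>r\<in>even_range p. c_weight r p) = 2)
       \<and> (p mod 12 = 7 \<longrightarrow> (\<Sum>r\<in>even_range p. c_weight r p) = 4/3)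
       \<and> (p mod 12 = 11 \<longrightarrow> (\<Sum>r\<in>even_range p. c_weight r p) = 0)"
proof (intro conjI impI)
  assume "p mod 12 = 1"
  hence "p mod 4 = 1" "p mod 3 = 1" by presburger+
  thus "(\<Sum>r\<in>even_range p. c_weight r p) = 10/3"
    using sum_eq[OF assms] cardA1[OF assms] cardB1[OF assms] by simp
next
  assume "p mod 12 = 5"
  hence "p mod 4 = 1" "p mod 3 = 2" by presburger+
  thus "(\<Sum>r\<in>even_range p. c_weight r p) = 2"
    using sum_eq[OF assms] cardA1[OF assms] cardB2 by simp
next
  assume "p mod 12 = 7"
  hence "p mod 4 = 3" "p mod 3 = 1" by presburger+
  thus "(\<Sum>r\<in>even_range p. c_weight r p) = 4/3"
    using sum_eq[OF assms] cardA3 cardB1[OF assms] by simp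
next
  assume "p mod 12 = 11"
  hence "p mod 4 = 3" "p mod 3 = 2" by presburger+
  thus "(\<Sum>r\<in>even_range p. c_weight r p) = 0"
    using sum_eq[OF assms] cardA3 cardB2 by simp
qed

end
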